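(* Let $T=(V,L)$ be a substrate tree, $\mathcal{J}=\langle N,B\rangle$ a request, and $N'\in\{1,\dots,N\}$ an integer. Let $\mathcal{C}$ be a VCE of the augmented request $\mathcal{J}'=\langle N+N',B\rangle$ in $T$ such that $\mathcal{C}(h)\le N'$ for every PM $h\in H$. Then $(\mathcal{C}_s,\mathcal{B}_s)$ with $\mathcal{C}_s=\mathcal{C}$ and $\mathcal{B}_s(l_v)=\min\{n_v,N+N'-n_v\}\cdot B$ (where $n_v=\sum_{h\in H\cap T_v}\mathcal{C}(h)$) is a feasible SVCE of $\mathcal{J}$.
   Context: Substrate: an undirected tree $T=(V,L)$ with $V=H\cup S$, where $H$ (the physical machines, PMs) are exactly the leaves and $S$ (switches) are the internal nodes, rooted at some $r\in S$. For $v\in V$, $T_v$ is the subtree rooted at $v$ and $l_v$ is the link from $v$ to its parent. Each PM $h$ has $c_h\in\mathbb{Z}_{\ge0}$ available VM slots and each non-root node $v$ has available bandwidth $b_v\ge0$ on $l_v$. A request is $\langle M,B\rangle$ with $M$ a positive integer and $B\ge0$. VCE: given a tree with PM capacities $c_h$ and link bandwidths $b_v$, a virtual cluster embedding of $\langle M,B\rangle$ is a function $\mathcal{C}:H\to\mathbb{Z}_{\ge0}$ with $\mathcal{C}(h)\le c_h$ for all $h$, $\sum_{h\in H}\mathcal{C}(h)=M$, and $\min\{n_v,M-n_v\}\cdot B\le b_v$ for every link $l_v$, where $n_v=\sum_{h\in H\cap T_v}\mathcal{C}(h)$. SVCE of $\mathcal{J}=\langle N,B\rangle$: a pair $(\mathcal{C}_s,\mathcal{B}_s)$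 with $\mathcal{C}_s:H\to\mathbb{Z}_{\ge0}$, $\mathcal{C}_s(h)\le c_h$, and $\mathcal{B}_s:L\to\mathbb{R}_{\ge0}$, $\mathcal{B}_s(l_v)\le b_v$, such that for every PM $F\in H$ there exists a VCE of $\langle N,B\rangle$ in the tree $(V\setminus\{F\},L\setminus\{l_F\})$ whose PM capacities are $\mathcal{C}_s(h)$ ($h\neq F$) and whose link bandwidths are $\mathcal{B}_s(l_v)$. *)

theory Defs
  imports Complex_Main
begin

text \<open>A rooted tree on a finite node set V with root r, given by a parent function p.
  Normalisation: p r = r; every node reaches the root by iterating p.
  The link l_v of a non-root node v is identified with v itself.\<close>

definition children :: "'a set \<Rightarrow> 'a \<Rightarrow> ('a \<Rightarrow> 'a) \<Rightarrow> 'a \<Rightarrow> 'a set" where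
  "children V r p v = {u \<in> V - {r}. p u = v}"

definition substrate_tree :: "'a set \<Rightarrow> 'a \<Rightarrow> ('a \<Rightarrow> 'a) \<Rightarrow> bool" where
  "substrate_tree V r p \<longleftrightarrow> finite V \<and> r \<in> V \<and> p r = r \<and>
     (\<forall>v \<in> V - {r}. p v \<in> V) \<and> (\<forall>v \<in> V. \<exists>k. (p ^^ k) v = r) \<and>
     children V r p r \<noteq> {}"

definition pms :: "'a set \<Rightarrow> 'a \<Rightarrow> ('a \<Rightarrow> 'a) \<Rightarrow> 'a set" where
  "pms V r p = {v \<in> V. children V r p v = {}}"

definition subtree :: "'a set \<Rightarrow> ('a \<Rightarrow> 'a) \<Rightarrow> 'a \<Rightarrow> 'a set" where
  "subtree V p v = {u \<in> V. \<exists>k. (p ^^ k) u = v}"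

definition load :: "'a set \<Rightarrow> ('a \<Rightarrow> 'a) \<Rightarrow> 'a set \<Rightarrow> ('a \<Rightarrow> nat) \<Rightarrow> 'a \<Rightarrow> nat" where
  "load V p H C v = (\<Sum>h \<in> H \<inter> subtree V p v. C h)"

definition vce :: "'a set \<Rightarrow> 'a \<Rightarrow> ('a \<Rightarrow> 'a) \<Rightarrow> 'a set \<Rightarrow> ('a \<Rightarrow> nat) \<Rightarrow> ('a \<Rightarrow> real)
    \<Rightarrow> nat \<Rightarrow> real \<Rightarrow> ('a \<Rightarrow> nat) \<Rightarrow> bool" where
  "vce V r p H c b M B C \<longleftrightarrow>
     (\<forall>h \<in> H. C h \<le> c h) \<and> (\<Sum>h \<in> H. C h) = M \<and>
     (\<forall>v \<in> V - {r}. real (min (load V p H C v) (M - load V p H C v)) * B \<le> b v)"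

definition svce :: "'a set \<Rightarrow> 'a \<Rightarrow> ('a \<Rightarrow> 'a) \<Rightarrow> ('a \<Rightarrow> nat) \<Rightarrow> ('a \<Rightarrow> real)
    \<Rightarrow> nat \<Rightarrow> real \<Rightarrow> ('a \<Rightarrow> nat) \<Rightarrow> ('a \<Rightarrow> real) \<Rightarrow> bool" where
  "svce V r p c b N B Cs Bs \<longleftrightarrow>
     (\<forall>h \<in> pms V r p. Cs h \<le> c h) \<and>
     (\<forall>v \<in> V - {r}. 0 \<le> Bs v \<and> Bs v \<le> b v) \<and>
     (\<forall>F \<in> pms V r p. \<exists>C'. vce (V - {F}) r p (pms V r p - {F}) Cs Bs N B C')"

end

theory Submission
  imports Defs
begin

lemma exists_sub:
  fixes f :: "'a \<Rightarrow> nat"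
  assumes "finite A" "n \<le> sum f A"
  shows "\<exists>g. (\<forall>x. g x \<le> f x) \<and> sum g A = n"
  using assms
proof (induction A arbitrary: n rule: finite_induct)
  case empty
  then show ?case by (intro exI[of _ "\<lambda>_. 0"]) auto
next
  case (insert a A)
  show ?case
  proof (cases "n \<le> sum f A")
    case True
    then obtain g where g: "\<forall>x. g x \<le> f x" "sum g A = n" using insert by blast
    have "sum (g(a:=0)) A = sum g A" using insert(2) by (intro sum.cong) auto
    then show ?thesis using g insert(1,2) by (intro exI[of _ "g(a:=0)"]) auto
  next
    case False
    have "sum (f(a := n - sum f A)) A = sum f A" using insert(2) by (intro sum.cong) auto
    then show ?thesis using False insert(1,2,4)
      by (intro exI[of _ "f(a := n - sum f A)"]) auto
  qed
qed

theorem lemma3: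
  fixes V :: "'a set" and r :: 'a and p :: "'a \<Rightarrow> 'a"
    and c :: "'a \<Rightarrow> nat" and b :: "'a \<Rightarrow> real"
    and N N' :: nat and B :: real and C :: "'a \<Rightarrow> nat"
  assumes tree: "substrate_tree V r p"
    and b_nonneg: "\<forall>v \<in> V - {r}. 0 \<le> b v"
    and N_pos: "1 \<le> N" and B_nonneg: "0 \<le> B"
    and N'_range: "1 \<le> N'" "N' \<le> N"
    and C_vce: "vce V r p (pms V r p) c b (N + N') B C"
    and C_bound: "\<forall>h \<in> pms V r p. C h \<le> N'"
  shows "svce V r p c b N B C
           (\<lambda>v. real (min (load V p (pms V r p) C v) (N + N' - load V p (pms V r p) C v)) * B)"
proof -
  define H where "H = pms V r p"
  have finH: "finite H" using tree unfolding H_def pms_def substrate_tree_def by auto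
  have sumC: "sum C H = N + N'" and Cc: "\<forall>h\<in>H. C h \<le> c h"
    and Cb: "\<forall>v \<in> V - {r}. real (min (load V p H C v) (N + N' - load V p H C v)) * B \<le> b v"
    using C_vce unfolding vce_def H_def by auto
  have loadle: "load V p H C v \<le> N + N'" for v
    unfolding load_def using sumC finH by (metis Int_lower1 sum_mono2 zero_le)
  have part3: "\<exists>C'. vce (V - {F}) r p (H - {F}) C Bs N B C'"
    if F: "F \<in> H" and Bs_def: "Bs = (\<lambda>v. real (min (load V p H C v) (N + N' - load V p H C v)) * B)"
    for F Bs
  proof -
    define f where "f = C(F := 0)"
    have "sum f H = sum C H - C F"
      unfolding f_def using F finH by (simp add: sum.remove)
    hence "N \<le> sum f H" using sumC C_bound F H_def by auto
    then obtain g where g: "\<forall>x. g x \<le> f x" "sum g H = N" using exists_sub finH by blast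
    have gF: "g F = 0" using g(1) unfolding f_def by (metis fun_upd_same le_zero_eq)
    have gC: "g x \<le> C x" for x using g(1) unfolding f_def by (metis fun_upd_apply le_zero_eq zero_le)
    have sumg': "sum g (H - {F}) = N" using g(2) gF F finH by (simp add: sum.remove)
    show ?thesis
    proof (intro exI[of _ g], unfold vce_def, intro conjI ballI)
      show "g h \<le> C h" if "h \<in> H - {F}" for h using gC by simp
      show "sum g (H - {F}) = N" by (rule sumg')
      fix v assume v: "v \<in> V - {F} - {r}"
      define S where "S = H \<inter> subtree V p v"
      have sub: "subtree (V - {F}) p v = subtree V p v - {F}" unfolding subtree_def by auto
      have l': "load (V - {F}) p (H - {F}) g v = sum g S"
      proof -
        have "load (V - {F}) p (H - {F}) g v = sum g (S - {F})"
          unfolding load_def S_def sub by (intro sum.cong) auto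
        also have "\<dots> = sum g S"
          using gF finH unfolding S_def by (intro sum.mono_neutral_left) auto
        finally show ?thesis .
      qed
      have lv: "load V p H C v = sum C S" unfolding load_def S_def ..
      have SH: "S \<subseteq> H" unfolding S_def by auto
      have finS: "finite S" using SH finH finite_subset by blast
      have a1: "sum g S \<le> sum C S" using gC by (simp add: sum_mono)
      have a2: "sum g (H - S) \<le> sum C (H - S)" using gC by (simp add: sum_mono)
      have s1: "sum C H = sum C S + sum C (H - S)" using SH finH
        by (metis sum.subset_diff add.commute)
      have s2: "sum g H = sum g S + sum g (H - S)" using SH finH
        by (metis sum.subset_diff add.commute)
      have key: "min (sum g S) (N - sum g S) \<le> min (sum C S) (N + N' - sum C S)"
        using a1 a2 s1 s2 sumC g(2) by linarith
      have "real (min (sum g S) (N - sum g S)) * B \<le> real (min (sum C S) (N + N' - sum C S)) * B"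
        using key B_nonneg by (intro mult_right_mono) auto
      then show "real (min (load (V - {F}) p (H - {F}) g v) (N - load (V - {F}) p (H - {F}) g v)) * B
          \<le> Bs v" unfolding l' Bs_def lv by simp
    qed
  qed
  show ?thesis
    unfolding svce_def H_def[symmetric]
  proof (intro conjI ballI)
    show "C h \<le> c h" if "h \<in> H" for h using Cc that by auto
    fix v assume v: "v \<in> V - {r}"
    show "0 \<le> real (min (load V p H C v) (N + N' - load V p H C v)) * B"
      using B_nonneg by simp
    show "real (min (load V p H C v) (N + N' - load V p H C v)) * B \<le> b v"
      using Cb v by auto
  next
    fix F assume "F \<in> H"
    then show "\<exists>C'. vce (V - {F}) r p (H - {F}) C
      (\<lambda>v. real (min (load V p H C v) (N + N' - load V p H C v)) * B) N B C'"
      using part3 by blast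
  qed
qed

end
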